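(* Let $a,b\ge 1$ be coprime integers with $a\le b$. Then there is a homogeneous polynomial $P_{a/b}(u,v,w)$ of degree $a+b-1$ with non-negative integer coefficients, not divisible by $u$, by $v$ or by $w$, such that $$M_{a/b}(x,y,z)=\frac{P_{a/b}(x^2,y^2,z^2)}{x^{a-1}\,y^{b-1}\,z^{a+b-1}}.$$
   Context: Markov polynomials. Let $x,y,z$ be indeterminates. Consider the set consisting of all rationals $\rho\in[0,1]$, each written in lowest terms $\rho=a/b$ with integers $a\ge 0$, $b\ge 1$, together with the formal symbol $1/0$ (i.e. $(a,b)=(1,0)$). To each such $\rho$ attach a Laurent polynomial $M_\rho(x,y,z)\in\mathbb{Z}[x^{\pm1},y^{\pm1},z^{\pm1}]$, the Markov polynomial, defined recursively by $M_{1/0}=y$, $M_{0/1}=x$, $M_{1/1}=\frac{x^2+y^2}{z}$, and: whenever $a/b$ and $c/d$ are elements of this set (non-negative integer pairs in lowest terms) with $|ad-bc|=1$ and $(a+2c)/(b+2d)\in[0,1]$, then $$M_{\frac{a+2c}{b+2d}}=\frac{M_{c/d}^2+M_{\frac{a+c}{b+d}}^2}{M_{a/b}}.$$ This determines $M_\rho$ uniquely for every rational $\rho\in[0,1]$. (For example $M_{1/2}=\frac{(x^2+y^2)^2+x^2z^2}{yz^2}$.) The triples $(M_{a/b},M_{c/d},M_{(a+c)/(b+d)})$ with $|ad-bc|=1$ solve $X^2+Y^2+Z^2=\frac{x^2+y^2+z^2}{xyz}XYZ$. *)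

theory Defs
  imports Complex_Main
begin

text \<open>Markov polynomials, evaluated at a point (x,y,z) with x,y,z > 0.
  A fraction a/b in lowest terms (or 1/0) is encoded by the pair (a,b) of naturals.
  markov_rel x y z a b v means: v is the value of M_{a/b} at (x,y,z),
  as produced by the defining recursion.\<close>

inductive markov_rel :: "real \<Rightarrow> real \<Rightarrow> real \<Rightarrow> nat \<Rightarrow> nat \<Rightarrow> real \<Rightarrow> bool"
  for x y z :: real where
  base_inf: "markov_rel x y z 1 0 y"
| base_zero: "markov_rel x y z 0 1 x"
| base_one: "markov_rel x y z 1 1 ((x\<^sup>2 + y\<^sup>2) / z)"
| step: "\<lbrakk> markov_rel x y z a b p; markov_rel x y z c d q;
           markov_rel x y z (a + c) (b + d) r;
           \<bar>int a * int d - int b * int c\<bar> = 1;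
           a + 2 * c \<le> b + 2 * d \<rbrakk>
         \<Longrightarrow> markov_rel x y z (a + 2 * c) (b + 2 * d) ((q\<^sup>2 + r\<^sup>2) / p)"

definition markov :: "nat \<Rightarrow> nat \<Rightarrow> real \<Rightarrow> real \<Rightarrow> real \<Rightarrow> real" where
  "markov a b x y z = (THE v. markov_rel x y z a b v)"

text \<open>A polynomial in three variables u,v,w with non-negative integer coefficients is
  given by its coefficient function c (coefficient of u^i v^j w^k is c i j k).\<close>

definition homogeneous3 :: "(nat \<Rightarrow> nat \<Rightarrow> nat \<Rightarrow> nat) \<Rightarrow> nat \<Rightarrow> bool" where
  "homogeneous3 c n \<longleftrightarrow> (\<forall>i j k. c i j k \<noteq> 0 \<longrightarrow> i + j + k = n)"

text \<open>Evaluation of a polynomial homogeneous of degree n (all monomials have exponents \<le> n).\<close>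
definition eval3 :: "(nat \<Rightarrow> nat \<Rightarrow> nat \<Rightarrow> nat) \<Rightarrow> nat \<Rightarrow> real \<Rightarrow> real \<Rightarrow> real \<Rightarrow> real" where
  "eval3 c n u v w = (\<Sum>i\<le>n. \<Sum>j\<le>n. \<Sum>k\<le>n. real (c i j k) * u ^ i * v ^ j * w ^ k)"

definition not_div_u :: "(nat \<Rightarrow> nat \<Rightarrow> nat \<Rightarrow> nat) \<Rightarrow> bool" where
  "not_div_u c \<longleftrightarrow> (\<exists>j k. c 0 j k \<noteq> 0)"
definition not_div_v :: "(nat \<Rightarrow> nat \<Rightarrow> nat \<Rightarrow> nat) \<Rightarrow> bool" where
  "not_div_v c \<longleftrightarrow> (\<exists>i k. c i 0 k \<noteq> 0)"
definition not_div_w :: "(nat \<Rightarrow> nat \<Rightarrow> nat \<Rightarrow> nat) \<Rightarrow> bool" where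
  "not_div_w c \<longleftrightarrow> (\<exists>i j. c i j 0 \<noteq> 0)"

end

theory Submission
  imports Defs "HOL-Library.Multiset"
begin


type_synonym mono = "int \<times> int \<times> int"

fun madd :: "mono \<Rightarrow> mono \<Rightarrow> mono" where
  "madd (a,b,c) (d,e,f) = (a+d, b+e, c+f)"

fun monv :: "real \<Rightarrow> real \<Rightarrow> real \<Rightarrow> mono \<Rightarrow> real" where
  "monv x y z (i,j,k) = power_int x i * power_int y j * power_int z k"

definition mp :: "mono multiset \<Rightarrow> mono multiset \<Rightarrow> mono multiset" where
  "mp P Q = sum_mset (image_mset (\<lambda>m. image_mset (madd m) Q) P)"

definition evm :: "real \<Rightarrow> real \<Rightarrow> real \<Rightarrow> mono multiset \<Rightarrow> real" where
  "evm x y z M = sum_mset (image_mset (monv x y z) M)"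

lemma monv_add: "x > 0 \<Longrightarrow> y > 0 \<Longrightarrow> z > 0 \<Longrightarrow> monv x y z (madd m n) = monv x y z m * monv x y z n"
  by (cases m; cases n) (simp add: power_int_add)

lemma monv_pos: "x > 0 \<Longrightarrow> y > 0 \<Longrightarrow> z > 0 \<Longrightarrow> monv x y z m > 0"
  by (cases m) simp

lemma mp_empty[simp]: "mp {#} Q = {#}" by (simp add: mp_def)
lemma mp_add_mset[simp]: "mp (add_mset m P) Q = image_mset (madd m) Q + mp P Q" by (simp add: mp_def)

lemma mem_mp: "n \<in># mp P Q \<longleftrightarrow> (\<exists>m1\<in>#P. \<exists>m2\<in>#Q. n = madd m1 m2)"
  by (induction P) auto

lemma evm_plus[simp]: "evm x y z (M + N) = evm x y z M + evm x y z N"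
  by (simp add: evm_def)

lemma evm_empty[simp]: "evm x y z {#} = 0" by (simp add: evm_def)

lemma evm_single[simp]: "evm x y z {#m#} = monv x y z m" by (simp add: evm_def)
lemma evm_add_mset[simp]: "evm x y z (add_mset m M) = monv x y z m + evm x y z M" by (simp add: evm_def)

lemma evm_mp: assumes "x > 0" "y > 0" "z > 0" shows "evm x y z (mp P Q) = evm x y z P * evm x y z Q"
proof (induction P)
  case empty then show ?case by simp
next
  case (add m P)
  have "evm x y z (image_mset (madd m) Q) = monv x y z m * evm x y z Q"
    by (induction Q) (simp_all add: monv_add[OF assms] algebra_simps)
  then show ?case using add by (simp add: algebra_simps)
qed

lemma evm_pos: assumes "x > 0" "y > 0" "z > 0" "M \<noteq> {#}" shows "evm x y z M > 0"
  using assms(4)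
proof (induction M)
  case empty then show ?case by simp
next
  case (add m M)
  then show ?case using monv_pos[OF assms(1-3), of m]
    by (cases "M = {#}") (auto intro: add_pos_pos)
qed

lemma sum_mset_as_sum:
  assumes "finite T" "set_mset M \<subseteq> T"
  shows "sum_mset (image_mset f M) = (\<Sum>t\<in>T. of_nat (count M t) * (f t :: real))"
  using assms(2)
proof (induction M)
  case empty then show ?case by simp
next
  case (add m M)
  have "(\<Sum>t\<in>T. of_nat (count (add_mset m M) t) * f t)
      = (\<Sum>t\<in>T. of_nat (count M t) * f t + (if t = m then f t else 0))"
    by (rule sum.cong) (auto simp: algebra_simps)
  also have "\<dots> = (\<Sum>t\<in>T. of_nat (count M t) * f t) + f m"
    using add.prems assms(1) by (simp add: sum.distrib)
  finally show ?case using add by simp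
qed



type_synonym mmat = "bool \<Rightarrow> bool \<Rightarrow> mono multiset"
type_synonym rmat = "bool \<Rightarrow> bool \<Rightarrow> real"

definition mmul :: "mmat \<Rightarrow> mmat \<Rightarrow> mmat" where
  "mmul P Q = (\<lambda>i j. mp (P i False) (Q False j) + mp (P i True) (Q True j))"

definition rmul :: "rmat \<Rightarrow> rmat \<Rightarrow> rmat" where
  "rmul P Q = (\<lambda>i j. P i False * Q False j + P i True * Q True j)"

definition evM :: "real \<Rightarrow> real \<Rightarrow> real \<Rightarrow> mmat \<Rightarrow> rmat" where
  "evM x y z W = (\<lambda>i j. evm x y z (W i j))"

definition rdet :: "rmat \<Rightarrow> real" where
  "rdet M = M False False * M True True - M False True * M True False"

definition rtr :: "rmat \<Rightarrow> real" where
  "rtr M = M False False + M True True"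

definition mA :: mmat where
  "mA = (\<lambda>i j. if i then (if j then {#(0,1,-1)#} else {#(1,0,-2)#})
                  else (if j then {#(1,0,0)#} else {#(2,-1,-1),(0,-1,1)#}))"

definition mB :: mmat where
  "mB = (\<lambda>i j. if i then (if j then {#(-1,2,-1),(-1,0,1)#} else {#(0,1,-2)#})
                  else (if j then {#(0,1,0)#} else {#(1,0,-1)#}))"

lemma evM_mmul: "x > 0 \<Longrightarrow> y > 0 \<Longrightarrow> z > 0 \<Longrightarrow> evM x y z (mmul P Q) = rmul (evM x y z P) (evM x y z Q)"
  by (simp add: evM_def mmul_def rmul_def evm_mp)

lemma rdet_mul: "rdet (rmul P Q) = rdet P * rdet Q"
  by (simp add: rdet_def rmul_def) algebra

lemma ch_left: assumes "rdet U = 1"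
  shows "rmul U (rmul U X) i j = rtr U * rmul U X i j - X i j"
  using assms by (cases i; cases j) (simp_all add: rdet_def rtr_def rmul_def; algebra)+

lemma ch_right: assumes "rdet U = 1"
  shows "rmul (rmul X U) U i j = rtr U * rmul X U i j - X i j"
  using assms by (cases i; cases j) (simp_all add: rdet_def rtr_def rmul_def; algebra)+

definition kk :: "real \<Rightarrow> real \<Rightarrow> real \<Rightarrow> real" where
  "kk x y z = (x\<^sup>2 + y\<^sup>2 + z\<^sup>2) / (x * y * z)"

definition EE :: "rmat \<Rightarrow> real" where "EE M = M False True"

lemma base_A: assumes "x > 0" "y > 0" "z > 0"
  shows "rdet (evM x y z mA) = 1" "EE (evM x y z mA) = x" "rtr (evM x y z mA) = kk x y z * x"
  using assms by (simp_all add: rdet_def EE_def rtr_def evM_def mA_def kk_def power_int_minus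
      field_simps power2_eq_square)

lemma base_B: assumes "x > 0" "y > 0" "z > 0"
  shows "rdet (evM x y z mB) = 1" "EE (evM x y z mB) = y" "rtr (evM x y z mB) = kk x y z * y"
  using assms by (simp_all add: rdet_def EE_def rtr_def evM_def mB_def kk_def power_int_minus
      field_simps power2_eq_square)

lemma base_BA: assumes "x > 0" "y > 0" "z > 0"
  shows "rdet (evM x y z (mmul mB mA)) = 1" "EE (evM x y z (mmul mB mA)) = (x\<^sup>2 + y\<^sup>2) / z"
     "rtr (evM x y z (mmul mB mA)) = kk x y z * ((x\<^sup>2 + y\<^sup>2) / z)"
  using assms base_A[OF assms] base_B[OF assms]
  by (simp_all add: evM_mmul rdet_mul) (simp_all add: rtr_def EE_def rmul_def evM_def mA_def mB_def kk_def power_int_minus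
      field_simps power2_eq_square)



lemma core_par:
  fixes p1 p2 q1 q2 r1 r2 t1 t2 s :: int
  assumes nn: "p1 \<ge> 0" "p2 \<ge> 0" "q1 \<ge> 0" "q2 \<ge> 0" "r1 \<ge> 0" "r2 \<ge> 0" "t1 \<ge> 0" "t2 \<ge> 0"
    and e: "p1 + q1 = r1 + t1" "p2 + q2 = r2 + t2"
    and d: "p1 * q2 - p2 * q1 = s" "r1 * t2 - r2 * t1 = s" and s: "s = 1 \<or> s = -1"
  shows "p1 = r1 \<and> p2 = r2"
proof -
  define e1 where "e1 = p1 + q1"
  define e2 where "e2 = p2 + q2"
  define \<beta> where "\<beta> = s * (p1 * r2 - p2 * r1)"
  have ss: "s * s = 1" using s by auto
  have d1: "p1 * e2 - p2 * e1 = s" using d(1) by (simp add: e1_def e2_def algebra_simps)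
  have d2: "r1 * e2 - r2 * e1 = s" using d(2) e by (simp add: e1_def e2_def algebra_simps)
  have id1: "s * r1 = s * p1 + (p1 * r2 - p2 * r1) * e1"
  proof -
    have a1: "s * r1 = r1 * (p1 * e2 - p2 * e1)" using d1 by simp
    have a2: "s * p1 = p1 * (r1 * e2 - r2 * e1)" using d2 by simp
    have "s * r1 - s * p1 = r1 * (p1 * e2 - p2 * e1) - p1 * (r1 * e2 - r2 * e1)" by (simp only: a1 a2)
    also have "\<dots> = (p1 * r2 - p2 * r1) * e1" by (simp add: algebra_simps)
    finally show ?thesis by simp
  qed
  have id2: "s * r2 = s * p2 + (p1 * r2 - p2 * r1) * e2"
  proof -
    have a1: "s * r2 = r2 * (p1 * e2 - p2 * e1)" using d1 by simp
    have a2: "s * p2 = p2 * (r1 * e2 - r2 * e1)" using d2 by simp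
    have "s * r2 - s * p2 = r2 * (p1 * e2 - p2 * e1) - p2 * (r1 * e2 - r2 * e1)" by (simp only: a1 a2)
    also have "\<dots> = (p1 * r2 - p2 * r1) * e2" by (simp add: algebra_simps)
    finally show ?thesis by simp
  qed
  have r1: "r1 = p1 + \<beta> * e1"
  proof -
    have "s * (s * r1) = s * (s * p1 + (p1 * r2 - p2 * r1) * e1)" using id1 by simp
    then show ?thesis using ss by (simp add: \<beta>_def algebra_simps)
  qed
  have r2: "r2 = p2 + \<beta> * e2"
  proof -
    have "s * (s * r2) = s * (s * p2 + (p1 * r2 - p2 * r1) * e2)" using id2 by simp
    then show ?thesis using ss by (simp add: \<beta>_def algebra_simps)
  qed
  have e1n: "e1 \<ge> 0" "e2 \<ge> 0" using nn by (auto simp: e1_def e2_def)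
  have "\<beta> = 0"
  proof (rule ccontr)
    assume "\<beta> \<noteq> 0"
    then consider "\<beta> \<ge> 1" | "\<beta> \<le> -1" by linarith
    then show False
    proof cases
      case 1
      have "\<beta> * e1 \<ge> e1" "\<beta> * e2 \<ge> e2" using 1 e1n by (simp_all add: mult_right_mono[of 1 \<beta>, simplified])
      moreover have "r1 \<le> e1" "r2 \<le> e2" using e nn by (auto simp: e1_def e2_def)
      ultimately have "p1 = 0" "p2 = 0" using r1 r2 nn by linarith+
      then show False using d(1) s by auto
    next
      case 2
      have "\<beta> * e1 \<le> - e1" "\<beta> * e2 \<le> - e2" using 2 e1n
        by (simp_all add: mult_right_mono[of \<beta> "-1", simplified])
      moreover have "p1 \<le> e1" "p2 \<le> e2" using e nn by (auto simp: e1_def e2_def)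
      ultimately have "r1 = 0" "r2 = 0" using r1 r2 nn by linarith+
      then show False using d(2) s by auto
    qed
  qed
  then show ?thesis using r1 r2 by simp
qed

lemma par_unique:
  fixes p1 p2 q1 q2 r1 r2 t1 t2 :: int
  assumes nn: "p1 \<ge> 0" "p2 \<ge> 0" "q1 \<ge> 0" "q2 \<ge> 0" "r1 \<ge> 0" "r2 \<ge> 0" "t1 \<ge> 0" "t2 \<ge> 0"
    and e: "p1 + q1 = r1 + t1" "p2 + q2 = r2 + t2"
    and d: "\<bar>p1 * q2 - p2 * q1\<bar> = 1" "\<bar>r1 * t2 - r2 * t1\<bar> = 1"
  shows "(p1 = r1 \<and> p2 = r2 \<and> q1 = t1 \<and> q2 = t2) \<or> (p1 = t1 \<and> p2 = t2 \<and> q1 = r1 \<and> q2 = r2)"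
proof (cases "p1 * q2 - p2 * q1 = r1 * t2 - r2 * t1")
  case True
  have "p1 = r1 \<and> p2 = r2"
    by (rule core_par[OF nn e refl True[symmetric]]) (use d in auto)
  then show ?thesis using e by auto
next
  case False
  have neg: "q1 * p2 - q2 * p1 = -(p1 * q2 - p2 * q1)" by algebra
  have F: "q1 * p2 - q2 * p1 = r1 * t2 - r2 * t1"
    using d False unfolding neg by (auto simp: abs_if split: if_splits)
  have "q1 = r1 \<and> q2 = r2"
    by (rule core_par[OF nn(3,4,1,2,5-8) _ _ refl F[symmetric]]) (use d e F in \<open>auto simp: abs_if split: if_splits\<close>)
  then show ?thesis using e by auto
qed



inductive wrel :: "nat \<Rightarrow> nat \<Rightarrow> mmat \<Rightarrow> bool" where
  w_inf: "wrel 1 0 mB"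
| w_zero: "wrel 0 1 mA"
| w_one: "wrel 1 1 (mmul mB mA)"
| w_step: "\<lbrakk> wrel a b X; wrel c d U; wrel (a + c) (b + d) V;
           \<bar>int a * int d - int b * int c\<bar> = 1; a + 2 * c \<le> b + 2 * d \<rbrakk>
         \<Longrightarrow> wrel (a + 2 * c) (b + 2 * d) (if a * d < b * c then mmul U V else mmul V U)"

lemma wrel_pos: "wrel a b W \<Longrightarrow> a + b > 0"
  by (induction rule: wrel.induct) auto

lemma no_base: "a + 2 * c \<le> 1 \<Longrightarrow> b + 2 * d \<le> 1 \<Longrightarrow> \<bar>int a * int d - int b * int c\<bar> = 1 \<Longrightarrow> False"
  for a b c d :: nat
  by (subgoal_tac "c = 0 \<and> d = 0") auto

lemma par_unique_nat:
  fixes p1 p2 q1 q2 r1 r2 t1 t2 :: nat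
  assumes e: "p1 + q1 = r1 + t1" "p2 + q2 = r2 + t2"
    and d: "\<bar>int p1 * int q2 - int p2 * int q1\<bar> = 1" "\<bar>int r1 * int t2 - int r2 * int t1\<bar> = 1"
  shows "(p1 = r1 \<and> p2 = r2 \<and> q1 = t1 \<and> q2 = t2) \<or> (p1 = t1 \<and> p2 = t2 \<and> q1 = r1 \<and> q2 = r2)"
proof -
  have e': "int p1 + int q1 = int r1 + int t1" "int p2 + int q2 = int r2 + int t2" using e by simp_all
  show ?thesis using par_unique[OF _ _ _ _ _ _ _ _ e' d] by simp
qed

lemma det_mid: "\<bar>int c * int (b + d) - int d * int (a + c)\<bar> = \<bar>int a * int d - int b * int c\<bar>"
  by (simp add: algebra_simps abs_minus_commute)

lemma dec_unique:
  fixes a b c d a' b' c' d' :: nat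
  assumes "a + 2 * c = a' + 2 * c'" "b + 2 * d = b' + 2 * d'"
    "\<bar>int a * int d - int b * int c\<bar> = 1" "\<bar>int a' * int d' - int b' * int c'\<bar> = 1"
    "a + b > 0" "a' + b' > 0"
  shows "a = a' \<and> b = b' \<and> c = c' \<and> d = d'"
proof -
  have "(c = c' \<and> d = d' \<and> a + c = a' + c' \<and> b + d = b' + d') \<or> (c = a' + c' \<and> d = b' + d' \<and> a + c = c' \<and> b + d = d')"
    by (rule par_unique_nat) (use assms det_mid in auto)
  then show ?thesis using assms(5,6) by auto
qed



lemma no_base_eq: "e = a + 2 * c \<Longrightarrow> f = b + 2 * d \<Longrightarrow> \<bar>int a * int d - int b * int c\<bar> = 1 \<Longrightarrow> e \<le> 1 \<Longrightarrow> f \<le> 1 \<Longrightarrow> P"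
  for a b c d e f :: nat using no_base by blast

lemma nat_10: "(1::nat) = 0 \<Longrightarrow> P" "(0::nat) = 1 \<Longrightarrow> P" by simp_all


lemma wrel_fun: "wrel a b W1 \<Longrightarrow> wrel a b W2 \<Longrightarrow> W1 = W2"
proof (induction arbitrary: W2 rule: wrel.induct)
  case w_inf
  from w_inf show ?case
    by (cases rule: wrel.cases) ((blast elim: nat_10)+, (rule no_base_eq, assumption, assumption, assumption, simp, simp))
next
  case w_zero
  from w_zero show ?case
    by (cases rule: wrel.cases) ((blast elim: nat_10)+, (rule no_base_eq, assumption, assumption, assumption, simp, simp))
next
  case w_one
  from w_one show ?case
    by (cases rule: wrel.cases) ((blast elim: nat_10)+, (rule no_base_eq, assumption, assumption, assumption, simp, simp))
next
  case (w_step a b X c d U V)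
  note H = w_step.hyps
  note IH = w_step.IH
  from w_step.prems show ?case
  proof (cases rule: wrel.cases)
    case (w_step a' b' X' c' d' U' V')
    have p1: "a + b > 0" "a' + b' > 0" using wrel_pos H w_step by blast+
    have eq: "a = a' \<and> b = b' \<and> c = c' \<and> d = d'"
      by (rule dec_unique) (use H w_step p1 in blast)+
    then have "X = X'" "U = U'" "V = V'" using IH w_step by blast+
    then show ?thesis using eq w_step by simp
  next
    case w_inf
    show ?thesis by (rule no_base_eq[of 1 a c 0 b d]) (use H w_inf in linarith)+
  next
    case w_zero
    show ?thesis by (rule no_base_eq[of 0 a c 1 b d]) (use H w_zero in linarith)+
  next
    case w_one
    show ?thesis by (rule no_base_eq[of 1 a c 1 b d]) (use H w_one in linarith)+
  qed
qed

lemma wrel_struct: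
  assumes X: "wrel a b X" and U: "wrel c d U" and V: "wrel (a + c) (b + d) V"
    and det: "\<bar>int a * int d - int b * int c\<bar> = 1"
  shows "V = (if a * d < b * c then mmul U X else mmul X U)"
  using V
proof (cases rule: wrel.cases)
  case w_inf
  then have "b = 0" "d = 0" by linarith+
  then show ?thesis using det by simp
next
  case w_zero
  then have "a = 0" "c = 0" by linarith+
  then show ?thesis using det by simp
next
  case w_one
  have "a + b > 0" "c + d > 0" using wrel_pos X U by blast+
  then have "(a = 1 \<and> b = 0 \<and> c = 0 \<and> d = 1) \<or> (a = 0 \<and> b = 1 \<and> c = 1 \<and> d = 0)"
    using w_one(1,2) by linarith
  then show ?thesis
  proof
    assume h: "a = 1 \<and> b = 0 \<and> c = 0 \<and> d = 1"
    then have "X = mB" "U = mA" using wrel_fun X U wrel.w_inf wrel.w_zero by blast+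
    then show ?thesis using h w_one(3) by simp
  next
    assume h: "a = 0 \<and> b = 1 \<and> c = 1 \<and> d = 0"
    then have "X = mA" "U = mB" using wrel_fun X U wrel.w_inf wrel.w_zero by blast+
    then show ?thesis using h w_one(3) by simp
  qed
next
  case (w_step a' b' X' c' d' U' V')
  have "(a = c' \<and> b = d' \<and> c = a' + c' \<and> d = b' + d') \<or> (a = a' + c' \<and> b = b' + d' \<and> c = c' \<and> d = d')"
  proof (rule par_unique_nat)
    show "a + c = c' + (a' + c')" "b + d = d' + (b' + d')" using w_step(1,2) by linarith+
    show "\<bar>int a * int d - int b * int c\<bar> = 1" by (rule det)
    show "\<bar>int c' * int (b' + d') - int d' * int (a' + c')\<bar> = 1" using det_mid w_step(7) by metis
  qed
  then show ?thesis
  proof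
    assume h: "a = c' \<and> b = d' \<and> c = a' + c' \<and> d = b' + d'"
    have "wrel a b U'" "wrel c d V'" using w_step(5,6) h by simp_all
    then have "X = U'" "U = V'" using wrel_fun X U by blast+
    moreover have "(a * d < b * c) \<longleftrightarrow> \<not> (a' * d' < b' * c')"
    proof -
      have h2: "a = c'" "b = d'" "c = a' + c'" "d = b' + d'" using h by blast+
      have "int a * int d - int b * int c = int c' * (int b' + int d') - int d' * (int a' + int c')"
        unfolding h2 by simp
      also have "\<dots> = int b' * int c' - int a' * int d'" by (simp add: algebra_simps)
      finally have "int a * int d - int b * int c = int b' * int c' - int a' * int d'" .
      then have "int a * int d < int b * int c \<longleftrightarrow> \<not> (int a' * int d' < int b' * int c')"
        using w_step(7) by (auto simp: abs_if split: if_splits)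
      then show ?thesis by (simp only: of_nat_mult[symmetric] of_nat_less_iff)
    qed
    ultimately show ?thesis using w_step(3) by simp
  next
    assume h: "a = a' + c' \<and> b = b' + d' \<and> c = c' \<and> d = d'"
    have "wrel a b V'" "wrel c d U'" using w_step(5,6) h by simp_all
    then have "X = V'" "U = U'" using wrel_fun X U by blast+
    moreover have "(a * d < b * c) \<longleftrightarrow> (a' * d' < b' * c')"
    proof -
      have h2: "a = a' + c'" "b = b' + d'" "c = c'" "d = d'" using h by blast+
      have "a * d = a' * d' + c' * d'" "b * c = b' * c' + c' * d'"
        unfolding h2 by (simp_all add: algebra_simps)
      then show ?thesis by linarith
    qed
    ultimately show ?thesis using w_step(3) by simp
  qed
qed



lemma vieta_gen:
  assumes "\<And>i j. N i j = rtr U * V i j - X i j" "rtr V = k * EE V" "rtr X = k * EE X"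
  shows "rtr N = k * EE N" "EE N = rtr U * EE V - EE X"
proof -
  have h: "N False False = rtr U * V False False - X False False" "N True True = rtr U * V True True - X True True"
    "N False True = rtr U * V False True - X False True" using assms(1) by blast+
  have "rtr N = rtr U * rtr V - rtr X" unfolding rtr_def h by (simp add: algebra_simps)
  also have "\<dots> = k * (rtr U * EE V - EE X)" using assms(2,3) by (simp add: algebra_simps)
  also have "\<dots> = k * EE N" unfolding EE_def h by simp
  finally show "rtr N = k * EE N" .
  show "EE N = rtr U * EE V - EE X" unfolding EE_def h by simp
qed

lemma step_real:
  assumes X: "wrel a b X" and U: "wrel c d U" and V: "wrel (a + c) (b + d) V"
    and det: "\<bar>int a * int d - int b * int c\<bar> = 1"
    and N: "N = (if a * d < b * c then mmul U V else mmul V U)"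
    and pos: "x > 0" "y > 0" "z > 0"
    and hU: "rdet (evM x y z U) = 1" "rtr (evM x y z U) = kk x y z * EE (evM x y z U)"
    and hV: "rdet (evM x y z V) = 1" "rtr (evM x y z V) = kk x y z * EE (evM x y z V)"
    and hX: "rtr (evM x y z X) = kk x y z * EE (evM x y z X)"
  shows "rdet (evM x y z N) = 1" "rtr (evM x y z N) = kk x y z * EE (evM x y z N)"
    "EE (evM x y z N) = kk x y z * EE (evM x y z U) * EE (evM x y z V) - EE (evM x y z X)"
proof -
  define Ur where "Ur = evM x y z U"
  define Vr where "Vr = evM x y z V"
  define Xr where "Xr = evM x y z X"
  define Nr where "Nr = evM x y z N"
  have Vs: "V = (if a * d < b * c then mmul U X else mmul X U)" by (rule wrel_struct[OF X U V det])
  have ent: "\<And>i j. Nr i j = rtr Ur * Vr i j - Xr i j"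
  proof (cases "a * d < b * c")
    case True
    then have "Nr = rmul Ur Vr" "Vr = rmul Ur Xr"
      using N Vs by (simp_all add: Nr_def Ur_def Vr_def Xr_def evM_mmul[OF pos])
    then show "\<And>i j. Nr i j = rtr Ur * Vr i j - Xr i j" using ch_left[of Ur Xr] hU(1) by (simp add: Ur_def)
  next
    case False
    then have "Nr = rmul Vr Ur" "Vr = rmul Xr Ur"
      using N Vs by (simp_all add: Nr_def Ur_def Vr_def Xr_def evM_mmul[OF pos])
    then show "\<And>i j. Nr i j = rtr Ur * Vr i j - Xr i j" using ch_right[of Ur Xr] hU(1) by (simp add: Ur_def)
  qed
  have "rdet Nr = 1"
  proof -
    have "Nr = rmul Ur Vr \<or> Nr = rmul Vr Ur"
      using N by (auto simp: Nr_def Ur_def Vr_def evM_mmul[OF pos])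
    then show ?thesis using hU(1) hV(1) rdet_mul by (auto simp: Ur_def Vr_def)
  qed
  moreover note g = vieta_gen[OF ent, where k = "kk x y z"]
  ultimately show "rdet (evM x y z N) = 1" "rtr (evM x y z N) = kk x y z * EE (evM x y z N)"
    "EE (evM x y z N) = kk x y z * EE (evM x y z U) * EE (evM x y z V) - EE (evM x y z X)"
    using hU hV hX by (simp_all add: Nr_def Ur_def Vr_def Xr_def)
qed

lemma wrel_real:
  assumes "wrel a b W" "x > 0" "y > 0" "z > 0"
  shows "rdet (evM x y z W) = 1 \<and> rtr (evM x y z W) = kk x y z * EE (evM x y z W)"
  using assms(1)
proof (induction rule: wrel.induct)
  case w_inf then show ?case using base_B[OF assms(2-4)] by simp
next
  case w_zero then show ?case using base_A[OF assms(2-4)] by simp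
next
  case w_one then show ?case using base_BA[OF assms(2-4)] by simp
next
  case (w_step a b X c d U V)
  show ?case
    using step_real[OF w_step.hyps(1-4) refl assms(2-4)] w_step.IH by blast
qed

lemma mp_ne: "P \<noteq> {#} \<Longrightarrow> Q \<noteq> {#} \<Longrightarrow> mp P Q \<noteq> {#}"
  by (cases P) auto

lemma wrel_ne: "wrel a b W \<Longrightarrow> W i j \<noteq> {#}"
proof (induction arbitrary: i j rule: wrel.induct)
  case w_inf then show ?case by (simp add: mB_def)
next
  case w_zero then show ?case by (simp add: mA_def)
next
  case w_one then show ?case by (simp add: mA_def mB_def mmul_def mp_ne)
next
  case (w_step a b X c d U V)
  then show ?case by (simp add: mmul_def mp_ne)
qed

lemma wrel_E_pos: "wrel a b W \<Longrightarrow> x > 0 \<Longrightarrow> y > 0 \<Longrightarrow> z > 0 \<Longrightarrow> EE (evM x y z W) > 0"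
  unfolding EE_def evM_def using evm_pos wrel_ne by blast



lemma vieta_alg: "(P::real)\<^sup>2 + Q\<^sup>2 + R\<^sup>2 = k * P * Q * R \<Longrightarrow> Q\<^sup>2 + R\<^sup>2 + (k * Q * R - P)\<^sup>2 = k * Q * R * (k * Q * R - P)"
  by algebra

lemma base_markov: assumes "x > 0" "y > 0" "z > 0"
  shows "x\<^sup>2 + y\<^sup>2 + ((x\<^sup>2 + y\<^sup>2) / z)\<^sup>2 = kk x y z * x * y * ((x\<^sup>2 + y\<^sup>2) / z)"
  using assms by (simp add: kk_def field_simps power2_eq_square)

lemma markov_triple:
  assumes "wrel e f V" "x > 0" "y > 0" "z > 0"
  shows "wrel a b X \<Longrightarrow> wrel c d U \<Longrightarrow> e = a + c \<Longrightarrow> f = b + d \<Longrightarrow> \<bar>int a * int d - int b * int c\<bar> = 1 \<Longrightarrow>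
    (EE (evM x y z X))\<^sup>2 + (EE (evM x y z U))\<^sup>2 + (EE (evM x y z V))\<^sup>2
      = kk x y z * EE (evM x y z X) * EE (evM x y z U) * EE (evM x y z V)"
  using assms(1)
proof (induction arbitrary: a b c d X U rule: wrel.induct)
  case w_inf
  then have "b = 0" "d = 0" by linarith+
  then show ?case using w_inf.prems(5) by simp
next
  case w_zero
  then have "a = 0" "c = 0" by linarith+
  then show ?case using w_zero.prems(5) by simp
next
  case w_one
  have "a + b > 0" "c + d > 0" using wrel_pos w_one.prems(1,2) by blast+
  then have "(a = 1 \<and> b = 0 \<and> c = 0 \<and> d = 1) \<or> (a = 0 \<and> b = 1 \<and> c = 1 \<and> d = 0)"
    using w_one.prems(3,4) by linarith
  then show ?case
  proof
    assume h: "a = 1 \<and> b = 0 \<and> c = 0 \<and> d = 1"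
    then have "wrel 1 0 X" "wrel 0 1 U" using w_one.prems(1,2) by simp_all
    then have "X = mB" "U = mA" using wrel_fun wrel.w_inf wrel.w_zero by blast+
    then show ?thesis using base_markov[OF assms(2-4)] base_A[OF assms(2-4)] base_B[OF assms(2-4)]
        base_BA[OF assms(2-4)] by (simp add: algebra_simps)
  next
    assume h: "a = 0 \<and> b = 1 \<and> c = 1 \<and> d = 0"
    then have "wrel 0 1 X" "wrel 1 0 U" using w_one.prems(1,2) by simp_all
    then have "X = mA" "U = mB" using wrel_fun wrel.w_inf wrel.w_zero by blast+
    then show ?thesis using base_markov[OF assms(2-4)] base_A[OF assms(2-4)] base_B[OF assms(2-4)]
        base_BA[OF assms(2-4)] by (simp add: algebra_simps)
  qed
next
  case (w_step a' b' X' c' d' U' V')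
  define ev where "ev W = EE (evM x y z W)" for W
  have rU: "rdet (evM x y z U') = 1 \<and> rtr (evM x y z U') = kk x y z * EE (evM x y z U')"
    using wrel_real[OF w_step.hyps(2) assms(2-4)] .
  have rV: "rdet (evM x y z V') = 1 \<and> rtr (evM x y z V') = kk x y z * EE (evM x y z V')"
    using wrel_real[OF w_step.hyps(3) assms(2-4)] .
  have rX: "rdet (evM x y z X') = 1 \<and> rtr (evM x y z X') = kk x y z * EE (evM x y z X')"
    using wrel_real[OF w_step.hyps(1) assms(2-4)] .
  have Ev: "ev (if a' * d' < b' * c' then mmul U' V' else mmul V' U') = kk x y z * ev U' * ev V' - ev X'"
    using step_real(3)[OF w_step.hyps(1-4) refl assms(2-4)] rU rV rX by (simp add: ev_def)
  have IH: "(ev X')\<^sup>2 + (ev U')\<^sup>2 + (ev V')\<^sup>2 = kk x y z * ev X' * ev U' * ev V'"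
    using w_step.IH(3)[OF w_step.hyps(1,2) refl refl w_step.hyps(4)] by (simp add: ev_def)
  define N where "N = (if a' * d' < b' * c' then mmul U' V' else mmul V' U')"
  have G1: "(ev U')\<^sup>2 + (ev V')\<^sup>2 + (ev N)\<^sup>2 = kk x y z * ev U' * ev V' * ev N"
    unfolding N_def Ev using vieta_alg[OF IH] .
  have G2: "(ev V')\<^sup>2 + (ev U')\<^sup>2 + (ev N)\<^sup>2 = kk x y z * ev V' * ev U' * ev N"
    using G1 by (simp add: ac_simps)
  have "(a = c' \<and> b = d' \<and> c = a' + c' \<and> d = b' + d') \<or> (a = a' + c' \<and> b = b' + d' \<and> c = c' \<and> d = d')"
  proof (rule par_unique_nat)
    show "a + c = c' + (a' + c')" "b + d = d' + (b' + d')" using w_step.prems(3,4) by linarith+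
    show "\<bar>int a * int d - int b * int c\<bar> = 1" by (rule w_step.prems(5))
    show "\<bar>int c' * int (b' + d') - int d' * int (a' + c')\<bar> = 1" using det_mid w_step.hyps(4) by metis
  qed
  then show ?case
  proof
    assume h: "a = c' \<and> b = d' \<and> c = a' + c' \<and> d = b' + d'"
    have "wrel a b U'" "wrel c d V'" using w_step.hyps(2,3) h by simp_all
    then have "X = U'" "U = V'" using wrel_fun w_step.prems(1,2) by blast+
    then show ?thesis using G1 by (simp add: ev_def N_def)
  next
    assume h: "a = a' + c' \<and> b = b' + d' \<and> c = c' \<and> d = d'"
    have "wrel a b V'" "wrel c d U'" using w_step.hyps(2,3) h by simp_all
    then have "X = V'" "U = U'" using wrel_fun w_step.prems(1,2) by blast+
    then show ?thesis using G2 by (simp add: ev_def N_def)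
  qed
qed



lemma markov_to_wrel:
  assumes "markov_rel x y z a b v" "x > 0" "y > 0" "z > 0"
  shows "\<exists>W. wrel a b W \<and> v = EE (evM x y z W)"
  using assms(1)
proof (induction rule: markov_rel.induct)
  case base_inf then show ?case using wrel.w_inf base_B[OF assms(2-4)] by metis
next
  case base_zero then show ?case using wrel.w_zero base_A[OF assms(2-4)] by metis
next
  case base_one then show ?case using wrel.w_one base_BA[OF assms(2-4)] by metis
next
  case (step a b p c d q r)
  obtain X where X: "wrel a b X" "p = EE (evM x y z X)" using step.IH(1) by blast
  obtain U where U: "wrel c d U" "q = EE (evM x y z U)" using step.IH(2) by blast
  obtain V where V: "wrel (a + c) (b + d) V" "r = EE (evM x y z V)" using step.IH(3) by blast
  define N where "N = (if a * d < b * c then mmul U V else mmul V U)"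
  have wN: "wrel (a + 2 * c) (b + 2 * d) N"
    unfolding N_def by (rule wrel.w_step[OF X(1) U(1) V(1) step.hyps(4,5)])
  have rU: "rdet (evM x y z U) = 1 \<and> rtr (evM x y z U) = kk x y z * EE (evM x y z U)"
    using wrel_real[OF U(1) assms(2-4)] .
  have rV: "rdet (evM x y z V) = 1 \<and> rtr (evM x y z V) = kk x y z * EE (evM x y z V)"
    using wrel_real[OF V(1) assms(2-4)] .
  have rX: "rdet (evM x y z X) = 1 \<and> rtr (evM x y z X) = kk x y z * EE (evM x y z X)"
    using wrel_real[OF X(1) assms(2-4)] .
  have EN: "EE (evM x y z N) = kk x y z * q * r - p"
    using step_real(3)[OF X(1) U(1) V(1) step.hyps(4) N_def assms(2-4)] rU rV rX X U V by simp
  have mk: "p\<^sup>2 + q\<^sup>2 + r\<^sup>2 = kk x y z * p * q * r"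
    using markov_triple[OF V(1) assms(2-4) X(1) U(1) refl refl step.hyps(4)] X U V by simp
  have pp: "p > 0" using wrel_E_pos[OF X(1) assms(2-4)] X by simp
  have "(q\<^sup>2 + r\<^sup>2) / p = kk x y z * q * r - p"
    using mk pp by (simp add: field_simps power2_eq_square)
  then show ?case using wN EN by metis
qed

lemma cmp_pair:
  fixes p1 p2 q1 q2 :: nat
  assumes d: "q1 * p2 = p1 * q2 + 1" and nb: "\<not> (p1 = 0 \<and> p2 = 1 \<and> q1 = 1 \<and> q2 = 0)"
  shows "(q1 \<le> p1 \<and> q2 \<le> p2) \<or> (p1 \<le> q1 \<and> p2 \<le> q2)"
proof (rule ccontr)
  assume "\<not> ?thesis"
  then consider "q1 < p1 \<and> p2 < q2" | "p1 < q1 \<and> q2 < p2" by linarith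
  then show False
  proof cases
    case 1
    have "q1 * p2 \<le> q1 * q2" using 1 by simp
    also have "\<dots> \<le> p1 * q2" using 1 by simp
    finally show False using d by linarith
  next
    case 2
    have "(p1 + 1) * (q2 + 1) \<le> q1 * p2" using 2 by (intro mult_mono) auto
    then have "p1 + q2 = 0" using d by (simp add: algebra_simps)
    then have "p1 = 0" "q2 = 0" by simp_all
    then have "q1 = 1" "p2 = 1" using d by simp_all
    then show False using nb \<open>p1 = 0\<close> \<open>q2 = 0\<close> by simp
  qed
qed

lemma p_le:
  fixes p1 p2 q1 q2 :: nat
  assumes d: "q1 * p2 = p1 * q2 + 1" and s: "p1 + q1 \<le> p2 + q2"
  shows "p1 \<le> p2"
proof (rule ccontr)
  assume "\<not> p1 \<le> p2"
  then have "p2 + 1 \<le> p1" by simp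
  then have "q1 \<le> q2" using s by simp
  have A: "q1 * p2 \<le> q2 * p2" using \<open>q1 \<le> q2\<close> by (rule mult_right_mono) simp
  have B: "(p2 + 1) * q2 \<le> p1 * q2" using \<open>p2 + 1 \<le> p1\<close> by (rule mult_right_mono) simp
  have C: "(p2 + 1) * q2 = q2 * p2 + q2" by (simp add: algebra_simps)
  show False using A B C d by linarith
qed

lemma q_le:
  fixes p1 p2 q1 q2 :: nat
  assumes d: "q1 * p2 = p1 * q2 + 1" and s: "p1 + q1 \<le> p2 + q2" and c: "p1 \<le> q1" "p2 \<le> q2"
  shows "q1 \<le> q2"
proof (rule ccontr)
  assume "\<not> q1 \<le> q2"
  then have h1: "q2 + 1 \<le> q1" by simp
  then have "p1 + 1 \<le> p2" using s by simp
  have "(q2 + 1) * p2 \<le> q1 * p2" using h1 by (rule mult_right_mono) simp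
  moreover have "p1 * q2 \<le> (p2 - 1) * q2" using \<open>p1 + 1 \<le> p2\<close> by (intro mult_right_mono) simp_all
  moreover have "(p2 - 1) * q2 + q2 = p2 * q2" using \<open>p1 + 1 \<le> p2\<close>
    by (cases p2) (auto simp: algebra_simps)
  ultimately have "q2 * p2 + p2 + q2 \<le> p2 * q2 + 1" using d by (simp add: algebra_simps)
  then have "p2 + q2 \<le> 1" by (simp add: mult.commute)
  then show False using \<open>p1 + 1 \<le> p2\<close> c by linarith
qed



lemma exist_pair:
  "q1 * p2 = p1 * q2 + 1 \<Longrightarrow> p1 + q1 \<le> p2 + q2 \<Longrightarrow>
   (\<exists>v. markov_rel x y z p1 p2 v) \<and> (\<exists>v. markov_rel x y z q1 q2 v) \<and> (\<exists>v. markov_rel x y z (p1 + q1) (p2 + q2) v)"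
proof (induction "p1 + p2 + q1 + q2" arbitrary: p1 p2 q1 q2 rule: less_induct)
  case less
  note d = less.prems(1) and s = less.prems(2)
  show ?case
  proof (cases "p1 = 0 \<and> p2 = 1 \<and> q1 = 1 \<and> q2 = 0")
    case True
    have "markov_rel x y z 0 1 x" "markov_rel x y z 1 0 y" "markov_rel x y z 1 1 ((x\<^sup>2 + y\<^sup>2) / z)"
      by (rule markov_rel.intros)+
    then show ?thesis using True by auto
  next
    case False
    from cmp_pair[OF d False] show ?thesis
    proof
      assume c: "q1 \<le> p1 \<and> q2 \<le> p2"
      then obtain s1 s2 where s12: "p1 = q1 + s1" "p2 = q2 + s2" using le_Suc_ex by blast
      have d': "q1 * s2 = s1 * q2 + 1" using d unfolding s12 by (simp add: algebra_simps)
      have "p1 \<le> p2" by (rule p_le[OF d s])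
      then have s': "s1 + q1 \<le> s2 + q2" using s12 by simp
      have q0: "q1 + q2 > 0" using d by (cases "q1 + q2 = 0") auto
      have lt: "s1 + s2 + q1 + q2 < p1 + p2 + q1 + q2" using s12 q0 by simp
      from less.hyps[OF lt d' s'] obtain v1 v2 v3 where
        m: "markov_rel x y z s1 s2 v1" "markov_rel x y z q1 q2 v2" "markov_rel x y z (s1 + q1) (s2 + q2) v3"
        by blast
      have det: "\<bar>int s1 * int q2 - int s2 * int q1\<bar> = 1"
      proof -
        have "int q1 * int s2 = int s1 * int q2 + 1" using d' by (metis of_nat_1 of_nat_add of_nat_mult)
        then show ?thesis by (simp add: algebra_simps)
      qed
      have le: "s1 + 2 * q1 \<le> s2 + 2 * q2" using s s12 by simp
      have "markov_rel x y z (s1 + 2 * q1) (s2 + 2 * q2) ((v2\<^sup>2 + v3\<^sup>2) / v1)"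
        by (rule markov_rel.step[OF m det le])
      moreover have "s1 + 2 * q1 = p1 + q1" "s2 + 2 * q2 = p2 + q2" using s12 by simp_all
      ultimately have "\<exists>v. markov_rel x y z (p1 + q1) (p2 + q2) v" by metis
      moreover have "\<exists>v. markov_rel x y z p1 p2 v" using m(3) s12 by (metis add.commute)
      ultimately show ?thesis using m(2) by blast
    next
      assume c: "p1 \<le> q1 \<and> p2 \<le> q2"
      then obtain t1 t2 where t12: "q1 = p1 + t1" "q2 = p2 + t2" using le_Suc_ex by blast
      have d': "t1 * p2 = p1 * t2 + 1" using d unfolding t12 by (simp add: algebra_simps)
      have "q1 \<le> q2" by (rule q_le[OF d s]) (use c in simp_all)
      then have s': "p1 + t1 \<le> p2 + t2" using t12 by simp
      have p0: "p1 + p2 > 0" using d by (cases "p1 + p2 = 0") auto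
      have lt: "p1 + p2 + t1 + t2 < p1 + p2 + q1 + q2" using t12 p0 by simp
      from less.hyps[OF lt d' s'] obtain v1 v2 v3 where
        m: "markov_rel x y z p1 p2 v1" "markov_rel x y z t1 t2 v2" "markov_rel x y z (p1 + t1) (p2 + t2) v3"
        by blast
      have m3: "markov_rel x y z (t1 + p1) (t2 + p2) v3" using m(3) by (simp add: add.commute)
      have det: "\<bar>int t1 * int p2 - int t2 * int p1\<bar> = 1"
      proof -
        have "int t1 * int p2 = int p1 * int t2 + 1" using d' by (metis of_nat_1 of_nat_add of_nat_mult)
        then show ?thesis by (simp add: algebra_simps)
      qed
      have le: "t1 + 2 * p1 \<le> t2 + 2 * p2" using s t12 by simp
      have "markov_rel x y z (t1 + 2 * p1) (t2 + 2 * p2) ((v1\<^sup>2 + v3\<^sup>2) / v2)"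
        by (rule markov_rel.step[OF m(2) m(1) m3 det le])
      moreover have "t1 + 2 * p1 = p1 + q1" "t2 + 2 * p2 = p2 + q2" using t12 by simp_all
      ultimately have "\<exists>v. markov_rel x y z (p1 + q1) (p2 + q2) v" by metis
      moreover have "\<exists>v. markov_rel x y z q1 q2 v" using m(3) t12 by metis
      ultimately show ?thesis using m(1) by blast
    qed
  qed
qed

lemma markov_exists:
  fixes a b :: nat
  assumes "1 \<le> a" "a \<le> b" "coprime a b"
  shows "\<exists>v. markov_rel x y z a b v"
proof (cases "a = b")
  case True
  then have "a = 1" "b = 1" using assms by auto
  then show ?thesis using markov_rel.base_one by blast
next
  case False
  then have ab: "a < b" using assms by simp
  then have b2: "b \<ge> 2" using assms by simp
  obtain u w where uw: "a * u = b * w + gcd a b" using bezout_nat[of a b] assms by auto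
  then have uw1: "a * u = b * w + 1" using assms(3) by simp
  define p2 where "p2 = u mod b"
  have "a * u = b * (a * (u div b)) + a * p2" unfolding p2_def
    by (metis distrib_left div_mult_mod_eq mult.commute mult.left_commute)
  then have "(a * p2) mod b = (b * w + 1) mod b"
    using uw1 by (metis mod_mult_self3 add.commute mult.commute)
  also have "\<dots> = 1 mod b" by (metis mod_mult_self1 add.commute mult.commute)
  also have "\<dots> = 1" using b2 by simp
  finally have m1: "(a * p2) mod b = 1" .
  define p1 where "p1 = (a * p2) div b"
  have e: "a * p2 = p1 * b + 1" unfolding p1_def using m1 div_mult_mod_eq[of "a * p2" b] by simp
  have p2b: "p2 < b" unfolding p2_def using b2 by simp
  have p1a: "p1 < a"
  proof -
    have "p1 * b < a * b" using e p2b assms(1)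
      by (metis add_lessD1 less_add_one mult_strict_left_mono not_gr0 not_one_le_zero order.strict_trans1 le_refl)
    then show ?thesis by simp
  qed
  obtain q1 q2 where q: "a = p1 + q1" "b = p2 + q2"
    using p1a p2b by (metis less_imp_add_positive)
  have d: "q1 * p2 = p1 * q2 + 1" using e unfolding q by (simp add: algebra_simps)
  have s: "p1 + q1 \<le> p2 + q2" using assms(2) q by simp
  show ?thesis using exist_pair[OF d s, of x y z] q by simp
qed



fun Pm :: "nat \<Rightarrow> nat \<Rightarrow> bool \<Rightarrow> bool \<Rightarrow> mono \<Rightarrow> bool" where
  "Pm a b i j (e1, e2, e3) \<longleftrightarrow>
     e1 + e2 + e3 = of_bool j - of_bool i \<and>
     even (e1 - int a - of_bool (i \<noteq> j)) \<and> even (e2 - int b - of_bool (i \<noteq> j)) \<and>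
     even (e3 - int a - int b - of_bool (i \<noteq> j)) \<and>
     e3 \<ge> - int a - int b - of_bool i + of_bool j \<and>
     e1 \<ge> - int a + of_bool (\<not> i \<and> a \<ge> 1) \<and>
     e2 \<ge> - int b + of_bool (j \<and> b \<ge> 1)"

lemma Pm_add:
  assumes "Pm a1 b1 i k m1" "Pm a2 b2 k j m2" "a1 \<ge> 1" "b2 \<ge> 1"
  shows "Pm (a1 + a2) (b1 + b2) i j (madd m1 m2)"
proof -
  obtain x1 y1 z1 where m1: "m1 = (x1, y1, z1)" by (cases m1) auto
  obtain x2 y2 z2 where m2: "m2 = (x2, y2, z2)" by (cases m2) auto
  show ?thesis using assms unfolding m1 m2
    by (cases i; cases j; cases k) (auto simp: of_bool_def split: if_splits)
qed

definition winv :: "nat \<Rightarrow> nat \<Rightarrow> mmat \<Rightarrow> bool" where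
  "winv a b W \<longleftrightarrow> (\<forall>i j m. m \<in># W i j \<longrightarrow> Pm a b i j m)
    \<and> (\<exists>e2 e3. (- int a, e2, e3) \<in># W True True)
    \<and> (a \<ge> 1 \<longrightarrow> (\<exists>e2 e3. (1 - int a, e2, e3) \<in># W False True))
    \<and> (\<exists>e1 e3. (e1, - int b, e3) \<in># W False False)
    \<and> (b \<ge> 1 \<longrightarrow> (\<exists>e1 e3. (e1, 1 - int b, e3) \<in># W False True))
    \<and> (\<forall>i j. \<exists>e1 e2. (e1, e2, - int a - int b - of_bool i + of_bool j) \<in># W i j)"

lemma mem_mmul: "m \<in># mmul P Q i j \<longleftrightarrow> (\<exists>k m1 m2. m1 \<in># P i k \<and> m2 \<in># Q k j \<and> m = madd m1 m2)"
proof -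
  have "m \<in># mmul P Q i j \<longleftrightarrow> (\<exists>k. m \<in># mp (P i k) (Q k j))"
    unfolding mmul_def by (metis (full_types) union_iff)
  then show ?thesis unfolding mem_mp by blast
qed

lemma mem_mmulI: "m1 \<in># P i k \<Longrightarrow> m2 \<in># Q k j \<Longrightarrow> madd m1 m2 \<in># mmul P Q i j"
  using mem_mmul by blast

lemma inv_mul:
  assumes P: "winv a1 b1 P" and Q: "winv a2 b2 Q" and a1: "a1 \<ge> 1" and b2: "b2 \<ge> 1"
  shows "winv (a1 + a2) (b1 + b2) (mmul P Q)"
proof -
  have A: "\<forall>i j m. m \<in># mmul P Q i j \<longrightarrow> Pm (a1 + a2) (b1 + b2) i j m"
  proof (intro allI impI)
    fix i j m assume "m \<in># mmul P Q i j"
    then obtain k m1 m2 where h: "m1 \<in># P i k" "m2 \<in># Q k j" "m = madd m1 m2" using mem_mmul by blast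
    have "Pm a1 b1 i k m1" using P h(1) unfolding winv_def by blast
    moreover have "Pm a2 b2 k j m2" using Q h(2) unfolding winv_def by blast
    ultimately show "Pm (a1 + a2) (b1 + b2) i j m" using Pm_add a1 b2 h(3) by blast
  qed
  have B: "\<exists>e2 e3. (- int (a1 + a2), e2, e3) \<in># mmul P Q True True"
  proof -
    obtain u1 u2 where "(- int a1, u1, u2) \<in># P True True" using P unfolding winv_def by blast
    moreover obtain v1 v2 where "(- int a2, v1, v2) \<in># Q True True" using Q unfolding winv_def by blast
    ultimately have "madd (- int a1, u1, u2) (- int a2, v1, v2) \<in># mmul P Q True True" by (rule mem_mmulI)
    then show ?thesis by auto
  qed
  have C: "\<exists>e2 e3. (1 - int (a1 + a2), e2, e3) \<in># mmul P Q False True"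
  proof -
    obtain u1 u2 where "(1 - int a1, u1, u2) \<in># P False True" using P a1 unfolding winv_def by blast
    moreover obtain v1 v2 where "(- int a2, v1, v2) \<in># Q True True" using Q unfolding winv_def by blast
    ultimately have "madd (1 - int a1, u1, u2) (- int a2, v1, v2) \<in># mmul P Q False True" by (rule mem_mmulI)
    moreover have "madd (1 - int a1, u1, u2) (- int a2, v1, v2) = (1 - int (a1 + a2), u1 + v1, u2 + v2)" by simp
    ultimately show ?thesis by metis
  qed
  have D: "\<exists>e1 e3. (e1, - int (b1 + b2), e3) \<in># mmul P Q False False"
  proof -
    obtain u1 u2 where "(u1, - int b1, u2) \<in># P False False" using P unfolding winv_def by blast
    moreover obtain v1 v2 where "(v1, - int b2, v2) \<in># Q False False" using Q unfolding winv_def by blast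
    ultimately have "madd (u1, - int b1, u2) (v1, - int b2, v2) \<in># mmul P Q False False" by (rule mem_mmulI)
    then show ?thesis by auto
  qed
  have E: "\<exists>e1 e3. (e1, 1 - int (b1 + b2), e3) \<in># mmul P Q False True"
  proof -
    obtain u1 u2 where "(u1, - int b1, u2) \<in># P False False" using P unfolding winv_def by blast
    moreover obtain v1 v2 where "(v1, 1 - int b2, v2) \<in># Q False True" using Q b2 unfolding winv_def by blast
    ultimately have "madd (u1, - int b1, u2) (v1, 1 - int b2, v2) \<in># mmul P Q False True" by (rule mem_mmulI)
    moreover have "madd (u1, - int b1, u2) (v1, 1 - int b2, v2) = (u1 + v1, 1 - int (b1 + b2), u2 + v2)" by simp
    ultimately show ?thesis by metis
  qed
  have F: "\<forall>i j. \<exists>e1 e2. (e1, e2, - int (a1 + a2) - int (b1 + b2) - of_bool i + of_bool j) \<in># mmul P Q i j"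
  proof (intro allI)
    fix i j
    obtain u1 u2 where "(u1, u2, - int a1 - int b1 - of_bool i + of_bool False) \<in># P i False"
      using P unfolding winv_def by blast
    moreover obtain v1 v2 where "(v1, v2, - int a2 - int b2 - of_bool False + of_bool j) \<in># Q False j"
      using Q unfolding winv_def by blast
    ultimately have "madd (u1, u2, - int a1 - int b1 - of_bool i + of_bool False)
        (v1, v2, - int a2 - int b2 - of_bool False + of_bool j) \<in># mmul P Q i j" by (rule mem_mmulI)
    moreover have "madd (u1, u2, - int a1 - int b1 - of_bool i + of_bool False)
        (v1, v2, - int a2 - int b2 - of_bool False + of_bool j)
       = (u1 + v1, u2 + v2, - int (a1 + a2) - int (b1 + b2) - of_bool i + of_bool j)" by simp
    ultimately show "\<exists>e1 e2. (e1, e2, - int (a1 + a2) - int (b1 + b2) - of_bool i + of_bool j) \<in># mmul P Q i j"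
      by metis
  qed
  show ?thesis unfolding winv_def using A B C D E F by (intro conjI) blast+
qed

lemma inv_A: "winv 0 1 mA"
  unfolding winv_def mA_def by (auto split: if_splits)

lemma inv_B: "winv 1 0 mB"
  unfolding winv_def mB_def by (auto split: if_splits)

lemma wrel_inv: "wrel a b W \<Longrightarrow> winv a b W"
proof (induction rule: wrel.induct)
  case w_inf then show ?case by (rule inv_B)
next
  case w_zero then show ?case by (rule inv_A)
next
  case w_one then show ?case using inv_mul[OF inv_B inv_A] by simp
next
  case (w_step a b X c d U V)
  show ?case
  proof (cases "a * d < b * c")
    case True
    then have c1: "c \<ge> 1" by (cases c) auto
    have bd: "b + d \<ge> 1" using w_step.hyps(4) by (cases "b + d") auto
    have "winv (c + (a + c)) (d + (b + d)) (mmul U V)" by (rule inv_mul[OF w_step.IH(2,3) c1 bd])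
    moreover have "c + (a + c) = a + 2 * c" "d + (b + d) = b + 2 * d" by simp_all
    ultimately show ?thesis using True by simp
  next
    case False
    have ne: "int a * int d \<noteq> int b * int c" using w_step.hyps(4) by auto
    then have "b * c < a * d" using False by (metis nat_neq_iff of_nat_mult)
    then have d1: "d \<ge> 1" by (cases d) auto
    have ac: "a + c \<ge> 1" using w_step.hyps(4) by (cases "a + c") auto
    have "winv ((a + c) + c) ((b + d) + d) (mmul V U)" by (rule inv_mul[OF w_step.IH(3,2) ac d1])
    moreover have "(a + c) + c = a + 2 * c" "(b + d) + d = b + 2 * d" by simp_all
    ultimately show ?thesis using False by simp
  qed
qed



lemma pow_split:
  fixes x :: real assumes "x > 0" "a \<ge> 1"
  shows "x ^ (2 * i) = x ^ (a - 1) * power_int x (2 * int i - (int a - 1))"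
proof -
  have "x ^ (a - 1) * power_int x (2 * int i - (int a - 1))
      = power_int x (int (a - 1)) * power_int x (2 * int i - (int a - 1))" by (simp add: power_int_of_nat)
  also have "\<dots> = power_int x (int (a - 1) + (2 * int i - (int a - 1)))"
    by (rule power_int_add[symmetric]) (use assms in simp)
  also have "int (a - 1) + (2 * int i - (int a - 1)) = int (2 * i)"
    using assms(2) by (cases a) auto
  also have "power_int x (int (2 * i)) = x ^ (2 * i)" by (rule power_int_of_nat)
  finally show ?thesis by simp
qed

definition phi :: "nat \<Rightarrow> nat \<Rightarrow> nat \<times> nat \<times> nat \<Rightarrow> mono" where
  "phi a b t = (case t of (i, j, k) \<Rightarrow> (2 * int i - (int a - 1), 2 * int j - (int b - 1), 2 * int k - (int a + int b - 1)))"

lemma phi_inj: "inj_on (phi a b) S"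
  unfolding phi_def by (rule inj_onI) auto

lemma decode:
  assumes "Pm a b False True (e1, e2, e3)" "a \<ge> 1" "b \<ge> 1"
  shows "(e1, e2, e3) = phi a b (nat ((e1 + int a - 1) div 2), nat ((e2 + int b - 1) div 2), nat ((e3 + int a + int b - 1) div 2))
    \<and> nat ((e1 + int a - 1) div 2) + nat ((e2 + int b - 1) div 2) + nat ((e3 + int a + int b - 1) div 2) = a + b - 1"
proof -
  have h: "e1 + e2 + e3 = 1" "even (e1 - int a - 1)" "even (e2 - int b - 1)" "even (e3 - int a - int b - 1)"
    "e3 \<ge> - int a - int b + 1" "e1 \<ge> - int a + 1" "e2 \<ge> - int b + 1"
    using assms by auto
  obtain i where i: "e1 + int a - 1 = 2 * i" using h(2) by (metis evenE even_diff even_add)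
  obtain j where j: "e2 + int b - 1 = 2 * j" using h(3) by (metis evenE even_diff even_add)
  obtain k where k: "e3 + int a + int b - 1 = 2 * k" using h(4) by (metis evenE even_diff even_add)
  have i0: "i \<ge> 0" "j \<ge> 0" "k \<ge> 0" using i j k h(5-7) by linarith+
  have "i + j + k = int a + int b - 1" using i j k h(1) by linarith
  then show ?thesis using i j k i0 assms(2,3) unfolding phi_def by auto
qed

theorem theorem3p1:
  fixes a b :: nat
  assumes "1 \<le> a" and "a \<le> b" and "coprime a b"
  shows "\<exists>c :: nat \<Rightarrow> nat \<Rightarrow> nat \<Rightarrow> nat.
           homogeneous3 c (a + b - 1) \<and> not_div_u c \<and> not_div_v c \<and> not_div_w c \<and>
           (\<forall>x y z :: real. x > 0 \<longrightarrow> y > 0 \<longrightarrow> z > 0 \<longrightarrow>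
              markov a b x y z =
                eval3 c (a + b - 1) (x\<^sup>2) (y\<^sup>2) (z\<^sup>2) / (x ^ (a - 1) * y ^ (b - 1) * z ^ (a + b - 1)))"
proof -
  have b1: "b \<ge> 1" using assms by simp
  obtain v0 where "markov_rel 1 1 1 a b v0" using markov_exists[OF assms] by blast
  then obtain W where W: "wrel a b W" using markov_to_wrel[of 1 1 1 a b v0] by auto
  have I: "winv a b W" by (rule wrel_inv[OF W])
  define M where "M = W False True"
  define n where "n = a + b - 1"
  define c where "c i j k = count M (phi a b (i, j, k))" for i j k
  have PM: "Pm a b False True m" if "m \<in># M" for m using I that unfolding winv_def M_def by blast
  have dec: "\<exists>i j k. m = phi a b (i, j, k) \<and> i + j + k = n" if "m \<in># M" for m
  proof -
    obtain e1 e2 e3 where m: "m = (e1, e2, e3)" by (cases m) auto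
    show ?thesis using decode[of a b e1 e2 e3] PM[OF that] assms(1) b1 unfolding m n_def by blast
  qed
  have hom: "homogeneous3 c n"
    unfolding homogeneous3_def
  proof (intro allI impI)
    fix i j k assume "c i j k \<noteq> 0"
    then have "phi a b (i, j, k) \<in># M" unfolding c_def by (simp add: count_inI)
    then obtain i' j' k' where "phi a b (i, j, k) = phi a b (i', j', k')" "i' + j' + k' = n" using dec by blast
    moreover have "i = i' \<and> j = j' \<and> k = k'" using calculation(1) phi_inj[of a b UNIV] unfolding inj_on_def by blast
    ultimately show "i + j + k = n" by simp
  qed
  have ndu: "not_div_u c"
  proof -
    obtain e2 e3 where "(1 - int a, e2, e3) \<in># M" using I assms(1) unfolding winv_def M_def by blast
    moreover obtain i j k where "(1 - int a, e2, e3) = phi a b (i, j, k)" using dec calculation by blast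
    moreover have "i = 0" using calculation(2) unfolding phi_def by auto
    ultimately show ?thesis unfolding not_div_u_def c_def by (metis count_eq_zero_iff)
  qed
  have ndv: "not_div_v c"
  proof -
    obtain e1 e3 where "(e1, 1 - int b, e3) \<in># M" using I b1 unfolding winv_def M_def by blast
    moreover obtain i j k where "(e1, 1 - int b, e3) = phi a b (i, j, k)" using dec calculation by blast
    moreover have "j = 0" using calculation(2) unfolding phi_def by auto
    ultimately show ?thesis unfolding not_div_v_def c_def by (metis count_eq_zero_iff)
  qed
  have ndw: "not_div_w c"
  proof -
    obtain e1 e2 where "(e1, e2, - int a - int b - of_bool False + of_bool True) \<in># M"
      using I unfolding winv_def M_def by blast
    moreover have "- int a - int b - of_bool False + of_bool True = 1 - int a - int b" by simp
    ultimately have "(e1, e2, 1 - int a - int b) \<in># M" by metis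
    moreover obtain i j k where "(e1, e2, 1 - int a - int b) = phi a b (i, j, k)" using dec calculation by blast
    moreover have "k = 0" using calculation(2) unfolding phi_def by auto
    ultimately show ?thesis unfolding not_div_w_def c_def by (metis count_eq_zero_iff)
  qed
  have val: "markov a b x y z = eval3 c n (x\<^sup>2) (y\<^sup>2) (z\<^sup>2) / (x ^ (a - 1) * y ^ (b - 1) * z ^ (a + b - 1))"
    if pos: "x > 0" "y > 0" "z > 0" for x y z :: real
  proof -
    define D where "D = x ^ (a - 1) * y ^ (b - 1) * z ^ (a + b - 1)"
    have Dp: "D > 0" unfolding D_def using pos by simp
    have mk: "markov a b x y z = evm x y z M"
    proof -
      obtain v where v: "markov_rel x y z a b v" using markov_exists[OF assms] by blast
      have uniq: "v' = evm x y z M" if mv: "markov_rel x y z a b v'" for v'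
      proof -
        obtain W' where "wrel a b W'" "v' = EE (evM x y z W')" using markov_to_wrel[OF mv pos] by blast
        then show ?thesis using wrel_fun[OF W] unfolding M_def EE_def evM_def by metis
      qed
      have "markov a b x y z = v" unfolding markov_def using v uniq by (metis theI)
      then show ?thesis using uniq v by simp
    qed
    define box where "box = {..n} \<times> {..n} \<times> {..n}"
    have fb: "finite box" unfolding box_def by simp
    have e3: "eval3 c n (x\<^sup>2) (y\<^sup>2) (z\<^sup>2) = (\<Sum>t\<in>box. of_nat (count M (phi a b t)) * (D * monv x y z (phi a b t)))"
    proof -
      have "eval3 c n (x\<^sup>2) (y\<^sup>2) (z\<^sup>2) = (\<Sum>i\<le>n. \<Sum>j\<le>n. \<Sum>k\<le>n. real (c i j k) * (x\<^sup>2) ^ i * (y\<^sup>2) ^ j * (z\<^sup>2) ^ k)"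
        unfolding eval3_def ..
      also have "\<dots> = (\<Sum>(i, j, k)\<in>box. real (c i j k) * (x\<^sup>2) ^ i * (y\<^sup>2) ^ j * (z\<^sup>2) ^ k)"
        unfolding box_def by (simp add: sum.cartesian_product)
      also have "\<dots> = (\<Sum>t\<in>box. of_nat (count M (phi a b t)) * (D * monv x y z (phi a b t)))"
      proof (rule sum.cong[OF refl], clarify)
        fix i j k
        have "(x\<^sup>2) ^ i * (y\<^sup>2) ^ j * (z\<^sup>2) ^ k = x ^ (2 * i) * y ^ (2 * j) * z ^ (2 * k)"
          by (simp add: power_mult)
        also have "\<dots> = D * monv x y z (phi a b (i, j, k))"
          unfolding D_def phi_def
          using pow_split[OF pos(1) assms(1), of i] pow_split[OF pos(2) b1, of j] pow_split[OF pos(3), of "a + b" k] assms(1)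
          by (simp add: algebra_simps)
        finally show "real (c i j k) * (x\<^sup>2) ^ i * (y\<^sup>2) ^ j * (z\<^sup>2) ^ k
            = of_nat (count M (phi a b (i, j, k))) * (D * monv x y z (phi a b (i, j, k)))"
          unfolding c_def by (simp add: algebra_simps)
      qed
      finally show ?thesis .
    qed
    also have "\<dots> = D * (\<Sum>t\<in>box. of_nat (count M (phi a b t)) * monv x y z (phi a b t))"
      by (simp add: sum_distrib_left algebra_simps)
    also have "(\<Sum>t\<in>box. of_nat (count M (phi a b t)) * monv x y z (phi a b t))
        = (\<Sum>m\<in>phi a b ` box. of_nat (count M m) * monv x y z m)"
      by (rule sum.reindex[OF phi_inj, symmetric, unfolded comp_def])
    also have "\<dots> = evm x y z M"
    proof -
      have "set_mset M \<subseteq> phi a b ` box"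
      proof
        fix m assume "m \<in># M"
        then obtain i j k where "m = phi a b (i, j, k)" "i + j + k = n" using dec by blast
        then show "m \<in> phi a b ` box" unfolding box_def by force
      qed
      then show ?thesis unfolding evm_def using sum_mset_as_sum[OF finite_imageI[OF fb]] by metis
    qed
    finally have "eval3 c n (x\<^sup>2) (y\<^sup>2) (z\<^sup>2) = D * evm x y z M" .
    then have h: "eval3 c n (x\<^sup>2) (y\<^sup>2) (z\<^sup>2) / D = evm x y z M" using Dp by simp
    show ?thesis unfolding D_def[symmetric] using mk h by simp
  qed
  show ?thesis using hom ndu ndv ndw val unfolding n_def by blast
qed

end
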